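(* Let $p$ be a prime number and let $a$ be an integer not divisible by $p$. Then for every positive integer $n$, $$\vartheta_p\left(\sum_{k=1}^{n}\left(\frac{1}{a^k}+\frac{1}{(p-a)^k}\right)\frac{p^k}{k}\right) \geq (n+1) - \log_p\left(\frac{n+1}{2}\right).$$ Moreover, this inequality is an equality if and only if $n = 2p^{\alpha}-1$ for some non-negative integer $\alpha$.
   Context: For a prime $p$ and a nonzero rational $r$, $\vartheta_p(r)$ denotes the $p$-adic valuation of $r$. For a positive real $x$, $\log_p(x) = \frac{\log x}{\log p}$ is the logarithm to base $p$. *)

theory Defs
  imports Complex_Main "HOL-Computational_Algebra.Primes" "HOL-Library.Extended_Real"
begin

definition padic_val_rat :: "nat \<Rightarrow> rat \<Rightarrow> ereal" where
  "padic_val_rat p r =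
     (if r = 0 then \<infinity>
      else (case quotient_of r of (a, b) \<Rightarrow>
              ereal (real_of_int (int (multiplicity (int p) a) - int (multiplicity (int p) b)))))"

end

theory Submission
  imports Defs
begin

definition ff :: "nat \<Rightarrow> nat \<Rightarrow> rat" where
  "ff j k = of_nat (j + k) / of_nat j * of_nat (j choose k)"

lemma choose_aux: "of_nat (i choose Suc k) * (of_nat k + 1 :: rat) = of_nat (i choose k) * (of_nat i - of_nat k)"
proof (cases "k \<le> i")
  case True
  have a: "(i - k) * (i choose k) = i * ((i - 1) choose k)" by (rule binomial_absorb_comp)
  have b: "(i choose Suc k) * Suc k = i * ((i - 1) choose k)"
  proof (cases i)
    case 0 then show ?thesis by simp
  next
    case (Suc i') then show ?thesis using Suc_times_binomial[of k i'] by (simp add: mult.commute)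
  qed
  have "(i choose Suc k) * Suc k = (i choose k) * (i - k)" using a b by (simp add: mult.commute)
  then have "of_nat ((i choose Suc k) * Suc k) = (of_nat ((i choose k) * (i - k)) :: rat)" by simp
  then show ?thesis using True by (simp add: of_nat_diff algebra_simps)
next
  case False then show ?thesis by (simp add: binomial_eq_0)
qed

lemma ff_alg: fixes I K c :: rat assumes "I > 0" "K \<ge> 0"
  shows "(I + 1 + (K + 1)) / (I + 1) * ((I + 1) * c / (K + 1)) = (I + (K + 1)) / I * (c * (I - K) / (K + 1)) + (I + K) / I * c"
proof -
  have n1: "I + 1 > 0" "K + 1 > 0" using assms by auto
  have "(I + 1 + (K + 1)) / (I + 1) * ((I + 1) * c / (K + 1)) = (I + K + 2) * c / (K + 1)" using n1 by (simp add: divide_simps)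
  also have "\<dots> = ((I + K + 1) * (I - K) + (I + K) * (K + 1)) * c / (I * (K + 1))" using n1 assms by (simp add: divide_simps) (simp add: algebra_simps)
  also have "\<dots> = (I + (K + 1)) / I * (c * (I - K) / (K + 1)) + (I + K) / I * c" using n1 assms by (simp add: divide_simps) (simp add: algebra_simps)
  finally show ?thesis .
qed

lemma ff_rec: assumes "i \<ge> 1" shows "ff (Suc i) (Suc k) = ff i (Suc k) + ff i k"
proof -
  have c1: "of_nat (Suc i choose Suc k) = (of_nat i + 1) * (of_nat (i choose k) :: rat) / (of_nat k + 1)"
  proof -
    have "of_nat (Suc k) * of_nat (Suc i choose Suc k) = (of_nat (Suc i) * of_nat (i choose k) :: rat)"
      by (metis Suc_times_binomial of_nat_mult)
    then show ?thesis by (simp add: field_simps)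
  qed
  have c2: "of_nat (i choose Suc k) = of_nat (i choose k) * (of_nat i - of_nat k) / (of_nat k + 1 :: rat)"
    using choose_aux[of i k] by (simp add: field_simps)
  have ip: "(of_nat i :: rat) > 0" using assms by simp
  have h1: "(of_nat (Suc i + Suc k) :: rat) = of_nat i + 1 + (of_nat k + 1)" by simp
  have h2: "(of_nat (Suc i) :: rat) = of_nat i + 1" by simp
  have h3: "(of_nat (i + Suc k) :: rat) = of_nat i + (of_nat k + 1)" by simp
  have h4: "(of_nat (i + k) :: rat) = of_nat i + of_nat k" by simp
  show ?thesis unfolding ff_def c1 c2 h1 h2 h3 h4 by (rule ff_alg[OF ip]) simp
qed

lemma kk_alg: fixes N J s c w :: rat assumes "N \<noteq> 0" "J \<noteq> 0"
  shows "- s * (N / J * c) * w / N = - (s * c * w / J)"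
  using assms by (simp add: divide_simps)

definition PW :: "rat \<Rightarrow> nat \<Rightarrow> rat" where
  "PW z n = (\<Sum>j=1..n. (-1) ^ (n - j) * ff j (n - j) * z ^ j)"

lemma ff_0: "j > 0 \<Longrightarrow> ff j 0 = 1" by (simp add: ff_def)

lemma PW_rec: assumes "n \<ge> 1" shows "PW z (Suc (Suc n)) = z * PW z (Suc n) - z * PW z n"
proof -
  define g where "g j = (-1) ^ (Suc (Suc n) - j) * ff j (Suc (Suc n) - j) * z ^ j" for j
  define h where "h j = (-1) ^ (Suc n - j) * ff j (Suc n - j) * z ^ j" for j
  define k where "k j = (-1) ^ (n - j) * ff j (n - j) * z ^ j" for j
  have g1: "g 1 = 0" using assms by (simp add: g_def ff_def binomial_eq_0)
  have "PW z (Suc (Suc n)) = sum g {1..Suc (Suc n)}" by (simp add: PW_def g_def)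
  also have "\<dots> = g 1 + sum g {Suc 1..Suc (Suc n)}" by (subst sum.atLeast_Suc_atMost) auto
  also have "sum g {Suc 1..Suc (Suc n)} = sum (\<lambda>i. g (Suc i)) {1..Suc n}" by (rule sum.shift_bounds_cl_Suc_ivl)
  also have "\<dots> = sum (\<lambda>i. g (Suc i)) {1..n} + g (Suc (Suc n))" by simp
  finally have A: "PW z (Suc (Suc n)) = sum (\<lambda>i. g (Suc i)) {1..n} + g (Suc (Suc n))" using g1 by simp
  have B: "PW z (Suc n) = sum h {1..n} + h (Suc n)" by (simp add: PW_def h_def)
  have C: "PW z n = sum k {1..n}" by (simp add: PW_def k_def)
  have D: "g (Suc i) = z * h i - z * k i" if "i \<in> {1..n}" for i
  proof -
    have i: "1 \<le> i" "i \<le> n" using that by auto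
    have e1: "Suc (Suc n) - Suc i = Suc (n - i)" "Suc n - i = Suc (n - i)" using i by auto
    show ?thesis unfolding g_def h_def k_def e1 ff_rec[OF i(1)] by (simp add: algebra_simps)
  qed
  have E: "g (Suc (Suc n)) = z * h (Suc n)" by (simp add: g_def h_def ff_0)
  have F: "sum (\<lambda>i. g (Suc i)) {1..n} = sum (\<lambda>i. z * h i - z * k i) {1..n}"
    by (rule sum.cong) (simp_all add: D)
  show ?thesis unfolding A B C E F
    by (simp add: sum_subtractf sum_distrib_left distrib_left)
qed

lemma PW_pow: assumes "x + y = z" "x * y = z" "n \<ge> 1" shows "PW z n = x ^ n + y ^ n"
proof -
  have P1: "PW z 1 = x ^ 1 + y ^ 1" using assms by (simp add: PW_def ff_0)
  have P2: "PW z 2 = x ^ 2 + y ^ 2"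
  proof -
    have "PW z 2 = - ff 1 1 * z + ff 2 0 * z ^ 2" by (simp add: PW_def numeral_2_eq_2)
    also have "\<dots> = z ^ 2 - 2 * z" by (simp add: ff_def ff_0)
    also have "\<dots> = x ^ 2 + y ^ 2" using assms(1,2) by (simp add: power2_eq_square algebra_simps flip: assms(1,2))
    finally show ?thesis .
  qed
  have rec: "x ^ Suc (Suc m) + y ^ Suc (Suc m) = z * (x ^ Suc m + y ^ Suc m) - z * (x ^ m + y ^ m)" for m
  proof -
    have "z * (x ^ Suc m + y ^ Suc m) - z * (x ^ m + y ^ m) = (x + y) * (x ^ Suc m + y ^ Suc m) - (x * y) * (x ^ m + y ^ m)"
      using assms by simp
    also have "\<dots> = x ^ Suc (Suc m) + y ^ Suc (Suc m)" by (simp add: algebra_simps)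
    finally show ?thesis by simp
  qed
  show ?thesis using assms(3)
  proof (induction n rule: less_induct)
    case (less m)
    consider "m = 1" | "m = 2" | l where "m = Suc (Suc l)" "l \<ge> 1"
    proof -
      have "m = 1 \<or> m = 2 \<or> (\<exists>l. m = Suc (Suc l) \<and> l \<ge> 1)" using less.prems
        by (cases m; cases "m - 1"; auto)
      then show ?thesis using that by blast
    qed
    then show ?case
    proof cases
      case 1 then show ?thesis using P1 by simp
    next
      case 2 then show ?thesis using P2 by simp
    next
      case 3
      have "PW z (Suc l) = x ^ Suc l + y ^ Suc l" using less.IH[of "Suc l"] 3 by simp
      moreover have "PW z l = x ^ l + y ^ l" using less.IH[of l] 3 by simp
      ultimately show ?thesis unfolding 3(1) PW_rec[OF 3(2)] rec by simp
    qed
  qed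
qed

definition ES :: "rat \<Rightarrow> nat \<Rightarrow> rat" where
  "ES z n = (\<Sum>j=1..n. (-1) ^ (n - j) * of_nat ((j - 1) choose (n - j)) * z ^ j / of_nat j)"

lemma ES_step: "ES z (Suc n) = ES z n + PW z (Suc n) / of_nat (Suc n)"
proof -
  define g where "g j = (-1) ^ (Suc n - j) * of_nat ((j - 1) choose (Suc n - j)) * z ^ j / (of_nat j :: rat)" for j
  define h where "h j = (-1) ^ (n - j) * of_nat ((j - 1) choose (n - j)) * z ^ j / (of_nat j :: rat)" for j
  define k where "k j = (-1) ^ (Suc n - j) * ff j (Suc n - j) * z ^ j / of_nat (Suc n)" for j
  have A: "ES z (Suc n) = sum g {1..n} + g (Suc n)" by (simp add: ES_def g_def)
  have B: "ES z n = sum h {1..n}" by (simp add: ES_def h_def)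
  have C: "PW z (Suc n) / of_nat (Suc n) = sum k {1..n} + k (Suc n)"
    by (simp add: PW_def k_def sum_divide_distrib add_divide_distrib)
  have D: "g j = h j + k j" if "j \<in> {1..n}" for j
  proof -
    define i where "i = j - 1"
    have i: "j = Suc i" using that unfolding i_def by auto
    have jn: "j \<le> n" using that by auto
    have e: "Suc n - j = Suc (n - j)" using jn by auto
    have f: "ff j (Suc (n - j)) = of_nat (Suc n) / of_nat j * of_nat (j choose Suc (n - j))"
      unfolding ff_def using jn by (simp add: Suc_diff_le)
    have jp: "(of_nat j :: rat) > 0" "(of_nat (Suc n) :: rat) > 0" using that by auto
    have bc: "(j choose Suc (n - j)) = (i choose (n - j)) + (i choose Suc (n - j))" unfolding i by simp
    have gg: "g j = - ((-1) ^ (n - j) * of_nat (i choose Suc (n - j)) * z ^ j / of_nat j)"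
      unfolding g_def e using i by simp
    have hh: "h j = (-1) ^ (n - j) * of_nat (i choose (n - j)) * z ^ j / of_nat j"
      unfolding h_def using i by simp
    have kk: "k j = - ((-1) ^ (n - j) * (of_nat (i choose (n - j)) + of_nat (i choose Suc (n - j))) * z ^ j / of_nat j)"
      unfolding k_def e f bc using jp kk_alg[of "of_nat (Suc n)" "of_nat j" "(-1) ^ (n - j)"] by simp
    show ?thesis unfolding gg hh kk by (simp add: algebra_simps add_divide_distrib diff_divide_distrib)
  qed
  have E: "g (Suc n) = k (Suc n)" by (simp add: g_def k_def ff_0)
  have F: "sum g {1..n} = sum (\<lambda>j. h j + k j) {1..n}" by (rule sum.cong) (simp_all add: D)
  show ?thesis unfolding A B C E F by (simp add: sum.distrib)
qed

lemma log_sum_ES: assumes "x + y = z" "x * y = z"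
  shows "(\<Sum>k=1..n. (x ^ k + y ^ k) / of_nat k) = ES z n"
proof (induction n)
  case 0 then show ?case by (simp add: ES_def)
next
  case (Suc n)
  have "PW z (Suc n) = x ^ Suc n + y ^ Suc n" using PW_pow[OF assms, of "Suc n"] by simp
  then show ?case unfolding ES_step Suc.IH[symmetric] by simp
qed

lemma one_plus_le_pow: fixes p m :: nat assumes "p \<ge> 2" shows "1 + m \<le> p ^ m"
proof -
  have "m < 2 ^ m" by (rule less_exp)
  moreover have "(2::nat) ^ m \<le> p ^ m" using assms by (simp add: power_mono)
  ultimately show ?thesis by linarith
qed

lemma key_real:
  fixes p n j v :: nat
  assumes p: "p \<ge> 2" and n: "n \<ge> 1" and j: "n + 1 \<le> 2 * j" and pv: "p ^ v \<le> j"
  shows "real (2 * j) - real v \<ge> real (n + 1) - log (real p) (real (n + 1) / 2)"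
    and "real (2 * j) - real v = real (n + 1) - log (real p) (real (n + 1) / 2) \<Longrightarrow> 2 * j = n + 1 \<and> j = p ^ v"
proof -
  define m where "m = 2 * j - (n + 1)"
  have jm: "2 * j = n + 1 + m" using j m_def by simp
  have pm: "1 + m \<le> p ^ m" using one_plus_le_pow[OF p] .
  have rp: "real p > 1" using p by simp
  have c1: "real (p ^ v) \<le> real j" using pv by linarith
  have c2: "2 * real j = real (n + 1) + real m" using jm by (metis of_nat_add of_nat_mult of_nat_numeral)
  have c3: "real (n + 1) + real m \<le> real (n + 1) * (1 + real m)" using n by (simp add: algebra_simps)
  have c4: "real (n + 1) * (1 + real m) \<le> real (n + 1) * real (p ^ m)"
  proof -
    have "real (1 + m) \<le> real (p ^ m)" using pm by (simp only: of_nat_le_iff)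
    then have "1 + real m \<le> real (p ^ m)" by simp
    then show ?thesis by (intro mult_left_mono) auto
  qed
  define L where "L = log (real p) (real (n + 1) / 2)"
  have pos1: "real (n + 1) / 2 > 0" by simp
  have logv: "log (real p) (real (p ^ v)) = real v" using rp by (simp add: log_nat_power)
  have logR: "log (real p) (real (n + 1) / 2 * real (p ^ m)) = L + real m"
  proof -
    have "log (real p) (real (n + 1) / 2 * real (p ^ m)) = log (real p) (real (n + 1) / 2) + log (real p) (real (p ^ m))"
      using rp pos1 by (intro log_mult_pos) (auto simp del: of_nat_power)
    also have "log (real p) (real (p ^ m)) = real m" using rp by (simp add: log_nat_power)
    finally show ?thesis unfolding L_def .
  qed
  have le0: "2 * real (p ^ v) \<le> real (n + 1) * real (p ^ m)" using c1 c2 c3 c4 by linarith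
  have le: "real (p ^ v) \<le> real (n + 1) / 2 * real (p ^ m)" using le0 by (simp del: of_nat_power of_nat_add)
  have pvpos: "real (p ^ v) > 0" using p by simp
  have "log (real p) (real (p ^ v)) \<le> log (real p) (real (n + 1) / 2 * real (p ^ m))"
    using le pvpos rp by (simp del: of_nat_power)
  then have vle: "real v \<le> L + real m" using logv logR by simp
  show "real (2 * j) - real v \<ge> real (n + 1) - log (real p) (real (n + 1) / 2)"
    using vle c2 unfolding L_def by simp
  assume eq: "real (2 * j) - real v = real (n + 1) - log (real p) (real (n + 1) / 2)"
  then have "real v = L + real m" using c2 unfolding L_def by simp
  then have lq: "log (real p) (real (p ^ v)) = log (real p) (real (n + 1) / 2 * real (p ^ m))" using logv logR by simp
  then have e1: "real (p ^ v) = real (n + 1) / 2 * real (p ^ m)"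
  proof -
    have q: "real (n + 1) / 2 * real (p ^ m) > 0" using p by (simp del: of_nat_power of_nat_add)
    show ?thesis by (rule inj_onD[OF log_inj[OF rp] lq]) (use q pvpos in auto)
  qed
  have e2: "2 * real (p ^ v) = real (n + 1) * real (p ^ m)" using e1 by (simp del: of_nat_power of_nat_add)
  have "real (n + 1) * (1 + real m) = real (n + 1) + real m" using e2 c1 c2 c3 c4 by linarith
  then have "real n * real m = 0" by (simp add: algebra_simps)
  then have "m = 0" using n by simp
  moreover have "real (p ^ v) = real j" using e2 c1 c2 c3 c4 by linarith
  ultimately show "2 * j = n + 1 \<and> j = p ^ v" using jm by (metis add_0_right of_nat_eq_iff)
qed

lemma val_frac:
  fixes p :: nat and N M :: int
  assumes p: "prime p" and N: "N \<noteq> 0" and M: "M \<noteq> 0"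
  shows "padic_val_rat p (of_int N / of_int M) =
         ereal (real_of_int (int (multiplicity (int p) N) - int (multiplicity (int p) M)))"
proof -
  define r where "r = (of_int N / of_int M :: rat)"
  have r0: "r \<noteq> 0" using N M by (simp add: r_def)
  obtain A B where AB: "quotient_of r = (A, B)" by (cases "quotient_of r") auto
  have rAB: "r = of_int A / of_int B" using quotient_of_div[OF AB] .
  have B: "B > 0" using quotient_of_denom_pos[OF AB] .
  have A: "A \<noteq> 0" using r0 rAB by auto
  have "of_int A / of_int B = (of_int N / of_int M :: rat)" using rAB r_def by simp
  then have "of_int A * of_int M = (of_int N * of_int B :: rat)" using B M by (simp add: frac_eq_eq)
  then have eq: "A * M = N * B" by (metis of_int_eq_iff of_int_mult)
  have pe: "prime_elem (int p)" using p by simp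
  have "multiplicity (int p) (A * M) = multiplicity (int p) (N * B)" using eq by simp
  then have "multiplicity (int p) A + multiplicity (int p) M = multiplicity (int p) N + multiplicity (int p) B"
    using pe A M N B by (simp add: prime_elem_multiplicity_mult_distrib)
  then have "int (multiplicity (int p) A) - int (multiplicity (int p) B) = int (multiplicity (int p) N) - int (multiplicity (int p) M)"
    by linarith
  then show ?thesis unfolding padic_val_rat_def r_def[symmetric] using r0 AB by simp
qed

lemma val_zero: "padic_val_rat p 0 = \<infinity>" by (simp add: padic_val_rat_def)

theorem theorem1:
  fixes p :: nat and a :: int and n :: nat
  assumes "prime p" and "\<not> int p dvd a" and "n \<ge> 1"
  defines "S \<equiv> (\<Sum>k=1..n. (1 / (of_int a) ^ k + 1 / (of_int (int p - a)) ^ k)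
                            * (of_nat p) ^ k / of_nat k :: rat)"
  shows "padic_val_rat p S \<ge> ereal (real (n + 1) - log (real p) (real (n + 1) / 2))
         \<and> (padic_val_rat p S = ereal (real (n + 1) - log (real p) (real (n + 1) / 2))
            \<longleftrightarrow> (\<exists>\<alpha>::nat. n = 2 * p ^ \<alpha> - 1))"
proof -
  note p = assms(1) and pa = assms(2) and n1 = assms(3)
  define P where "P = int p"
  define b where "b = P - a"
  have pP: "prime P" using p by (simp add: P_def)
  have p2: "p \<ge> 2" using p by (simp add: prime_ge_2_nat)
  have a0: "a \<noteq> 0" using pa by auto
  have pb: "\<not> P dvd b"
  proof
    assume "P dvd b"
    then have "P dvd P - b" by (simp add: dvd_diff)
    then show False using pa by (simp add: b_def P_def)
  qed
  have b0: "b \<noteq> 0" using pb by auto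
  define Q where "Q = a * b"
  have Q0: "Q \<noteq> 0" using a0 b0 by (simp add: Q_def)
  have pQ: "\<not> P dvd Q" using pa pb pP unfolding Q_def P_def by (simp add: prime_dvd_mult_iff)
  define x where "x = (of_int P / of_int a :: rat)"
  define y where "y = (of_int P / of_int b :: rat)"
  define z where "z = (of_int (P ^ 2) / of_int Q :: rat)"
  have ab: "a + b = P" by (simp add: b_def)
  have ra: "(of_int a :: rat) \<noteq> 0" "(of_int b :: rat) \<noteq> 0" using a0 b0 by auto
  have rab: "(of_int P :: rat) = of_int a + of_int b" using ab by (metis of_int_add)
  have hxy1: "x + y = z" unfolding x_def y_def z_def Q_def using ra
    by (simp add: field_simps power2_eq_square) (simp add: rab algebra_simps)
  have hxy2: "x * y = z" unfolding x_def y_def z_def Q_def using ra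
    by (simp add: field_simps power2_eq_square)
  have S1: "S = (\<Sum>k=1..n. (x ^ k + y ^ k) / of_nat k)"
    unfolding S_def x_def y_def b_def P_def
    by (rule sum.cong) (simp_all add: power_divide field_simps)
  have S2: "S = ES z n" using S1 log_sum_ES[OF hxy1 hxy2] by simp
  define F :: nat where "F = fact n"
  define M where "M = int F * Q ^ n"
  define C where "C j = ((j - 1) choose (n - j))" for j
  define T where "T j = (-1) ^ (n - j) * (int (C j) * P ^ (2 * j) * Q ^ (n - j) * int (F div j))" for j
  define N where "N = (\<Sum>j=1..n. T j)"
  have F0: "F > 0" by (simp add: F_def)
  have M0: "M \<noteq> 0" using F0 Q0 by (simp add: M_def)
  have Fj: "F = j * (F div j)" if "j \<in> {1..n}" for j
    using that dvd_fact[of j n] unfolding F_def by auto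
  have Fd0: "F div j \<noteq> 0" if j: "j \<in> {1..n}" for j
    using Fj[OF j] F0 by (metis mult_0_right less_irrefl)
  have trm: "(-1) ^ (n - j) * of_nat ((j - 1) choose (n - j)) * z ^ j / of_nat j = (of_int (T j) / of_int M :: rat)"
    if j: "j \<in> {1..n}" for j
  proof -
    have jn: "j \<le> n" "j \<ge> 1" using j by auto
    have Qn: "Q ^ n = Q ^ j * Q ^ (n - j)" using jn by (simp flip: power_add)
    have M': "(of_int M :: rat) = of_nat j * of_nat (F div j) * of_int Q ^ j * of_int Q ^ (n - j)"
    proof -
      have "(of_int M :: rat) = of_nat F * of_int (Q ^ j * Q ^ (n - j))" unfolding M_def Qn by simp
      also have "of_nat F = (of_nat (j * (F div j)) :: rat)" using Fj[OF j] by simp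
      finally show ?thesis by simp
    qed
    have nz: "(of_nat j :: rat) \<noteq> 0" "(of_nat (F div j) :: rat) \<noteq> 0" "(of_int Q :: rat) \<noteq> 0"
    proof -
      have "F div j \<noteq> 0" using Fj[OF j] F0 by (metis mult_0_right less_irrefl)
      then show "(of_nat j :: rat) \<noteq> 0" "(of_nat (F div j) :: rat) \<noteq> 0" "(of_int Q :: rat) \<noteq> 0"
        using jn Q0 by auto
    qed
    show ?thesis unfolding M' T_def z_def C_def using nz
      by (simp add: power_divide field_simps power_mult power_mult_distrib flip: power_mult)
  qed
  have SNM: "S = of_int N / of_int M"
    unfolding S2 ES_def N_def of_int_sum sum_divide_distrib by (rule sum.cong) (use trm in auto)
  define mu where "mu X = multiplicity P X" for X
  define e where "e = mu (int F)"
  have pe: "prime_elem P" using pP by (rule prime_imp_prime_elem)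
  have nu: "\<not> is_unit P" using pe by (rule prime_elem_not_unit)
  have mm: "multiplicity P (u * v) = multiplicity P u + multiplicity P v" if "u \<noteq> 0" "v \<noteq> 0" for u v
    by (rule prime_elem_multiplicity_mult_distrib[OF pe that])
  have mpow: "multiplicity P (u ^ k) = k * multiplicity P u" if "u \<noteq> 0" for u k
    by (rule prime_elem_multiplicity_power_distrib[OF pe that])
  have muQ: "mu Q = 0" unfolding mu_def using pQ by (rule not_dvd_imp_multiplicity_0)
  have muM: "mu M = e"
    unfolding M_def e_def mu_def using F0 Q0 muQ
    by (simp add: mm mpow mu_def)
  have ejw: "e = mu (int j) + mu (int (F div j))" if j: "j \<in> {1..n}" for j
  proof -
    have "int F = int j * int (F div j)" using Fj[OF j] by (metis of_nat_mult)
    moreover have "int (F div j) \<noteq> 0" "int j \<noteq> 0" using Fd0[OF j] j by auto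
    ultimately show ?thesis unfolding e_def mu_def using pe by (simp add: prime_elem_multiplicity_mult_distrib)
  qed
  have muT: "T j \<noteq> 0 \<and> mu (T j) = mu (int (C j)) + 2 * j + mu (int (F div j))"
    if j: "j \<in> {1..n}" and Cj: "C j \<noteq> 0" for j
  proof -
    have Fd: "int (F div j) \<noteq> 0" using Fd0[OF j] by simp
    have P0: "P \<noteq> 0" using pP by auto
    have u: "is_unit ((-1::int) ^ (n - j))" by simp
    have X0: "int (C j) * P ^ (2 * j) * Q ^ (n - j) * int (F div j) \<noteq> 0" using Cj P0 Q0 Fd by simp
    have "mu (T j) = mu (int (C j) * P ^ (2 * j) * Q ^ (n - j) * int (F div j))"
      unfolding T_def mu_def by (rule multiplicity_times_unit_right[OF u])
    also have "\<dots> = mu (int (C j)) + 2 * j + mu (int (F div j))"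
    proof -
      have n1: "int (C j) \<noteq> 0" "P ^ (2 * j) \<noteq> 0" "Q ^ (n - j) \<noteq> 0" using Cj P0 Q0 by auto
      have n2: "int (C j) * P ^ (2 * j) \<noteq> 0" "int (C j) * P ^ (2 * j) * Q ^ (n - j) \<noteq> 0" using n1 by auto
      show ?thesis unfolding mu_def mm[OF n2(2) Fd] mm[OF n2(1) n1(3)] mm[OF n1(1) n1(2)] mpow[OF Q0] mpow[OF P0]
        using muQ pe unfolding mu_def by (simp add: multiplicity_prime_power)
    qed
    finally show ?thesis using X0 u unfolding T_def by auto
  qed
  have relv: "n + 1 \<le> 2 * j" if j: "j \<in> {1..n}" and Cj: "C j \<noteq> 0" for j
  proof -
    have "\<not> (j - 1 < n - j)" using Cj unfolding C_def by (auto simp: binomial_eq_0)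
    then show ?thesis using j by auto
  qed
  have pvj: "p ^ mu (int j) \<le> j" if "j \<ge> 1" for j
  proof -
    have "P ^ mu (int j) dvd int j" unfolding mu_def by (rule multiplicity_dvd)
    then have "P ^ mu (int j) \<le> int j" using that by (intro zdvd_imp_le) auto
    then show ?thesis unfolding P_def by (metis of_nat_le_iff of_nat_power)
  qed
  have LB: "P ^ nat (K + int e) dvd (\<Sum>j\<in>A. T j)"
    if A: "A \<subseteq> {1..n}" and H: "\<forall>j\<in>A. C j \<noteq> 0 \<longrightarrow> K \<le> int (2 * j) - int (mu (int j))" for A K
  proof (rule dvd_sum)
    fix j assume jA: "j \<in> A"
    then have j: "j \<in> {1..n}" using A by auto
    show "P ^ nat (K + int e) dvd T j"
    proof (cases "C j = 0")
      case True then show ?thesis by (simp add: T_def)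
    next
      case False
      have "nat (K + int e) \<le> mu (T j)" using muT[OF j False] ejw[OF j] H jA False by auto
      then show ?thesis unfolding mu_def by (rule multiplicity_dvd')
    qed
  qed
  have valS: "padic_val_rat p S = ereal (real_of_int (int (mu N) - int e))" if "N \<noteq> 0"
    unfolding SNM using val_frac[OF p that M0] muM unfolding mu_def P_def by simp
  have valS0: "padic_val_rat p S = \<infinity>" if "N = 0" unfolding SNM that by (simp add: val_zero)
  have geK: "padic_val_rat p S \<ge> ereal (of_int K)"
    if H: "\<forall>j\<in>{1..n}. C j \<noteq> 0 \<longrightarrow> K \<le> int (2 * j) - int (mu (int j))" for K
  proof (cases "N = 0")
    case True then show ?thesis using valS0 by simp
  next
    case False
    have "P ^ nat (K + int e) dvd N" unfolding N_def by (rule LB[OF _ H]) simp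
    then have "nat (K + int e) \<le> mu N" unfolding mu_def by (intro multiplicity_geI False nu)
    then have "K \<le> int (mu N) - int e" by linarith
    then show ?thesis using valS[OF False] by simp
  qed
  define B where "B = real (n + 1) - log (real p) (real (n + 1) / 2)"
  have kr1: "real (2 * j) - real (mu (int j)) \<ge> B" if j: "j \<in> {1..n}" and Cj: "C j \<noteq> 0" for j
    unfolding B_def using key_real(1)[OF p2 n1 relv[OF j Cj] pvj] j by auto
  have kr2: "2 * j = n + 1 \<and> j = p ^ mu (int j)"
    if j: "j \<in> {1..n}" and Cj: "C j \<noteq> 0" and eq: "real (2 * j) - real (mu (int j)) = B" for j
    using key_real(2)[OF p2 n1 relv[OF j Cj] pvj] j eq unfolding B_def by auto
  have part1: "padic_val_rat p S \<ge> ereal B"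
  proof -
    have "\<forall>j\<in>{1..n}. C j \<noteq> 0 \<longrightarrow> \<lceil>B\<rceil> \<le> int (2 * j) - int (mu (int j))"
    proof (intro ballI impI)
      fix j assume j: "j \<in> {1..n}" and Cj: "C j \<noteq> 0"
      have "B \<le> real_of_int (int (2 * j) - int (mu (int j)))" using kr1[OF j Cj] by simp
      then show "\<lceil>B\<rceil> \<le> int (2 * j) - int (mu (int j))" by (simp add: ceiling_le_iff)
    qed
    then have "padic_val_rat p S \<ge> ereal (of_int \<lceil>B\<rceil>)" by (rule geK)
    moreover have "ereal B \<le> ereal (of_int \<lceil>B\<rceil>)" by simp
    ultimately show ?thesis by (rule order_trans[rotated])
  qed
  have part2: "\<exists>\<alpha>::nat. n = 2 * p ^ \<alpha> - 1" if eq: "padic_val_rat p S = ereal B"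
  proof (rule ccontr)
    assume no: "\<not> (\<exists>\<alpha>::nat. n = 2 * p ^ \<alpha> - 1)"
    have "\<forall>j\<in>{1..n}. C j \<noteq> 0 \<longrightarrow> \<lfloor>B\<rfloor> + 1 \<le> int (2 * j) - int (mu (int j))"
    proof (intro ballI impI)
      fix j assume j: "j \<in> {1..n}" and Cj: "C j \<noteq> 0"
      have "real (2 * j) - real (mu (int j)) \<noteq> B"
      proof
        assume "real (2 * j) - real (mu (int j)) = B"
        from kr2[OF j Cj this] have "n = 2 * p ^ mu (int j) - 1" by simp
        then show False using no by blast
      qed
      then have "B < real_of_int (int (2 * j) - int (mu (int j)))" using kr1[OF j Cj] by simp
      then have "\<lfloor>B\<rfloor> < int (2 * j) - int (mu (int j))" by (simp add: floor_less_iff)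
      then show "\<lfloor>B\<rfloor> + 1 \<le> int (2 * j) - int (mu (int j))" by simp
    qed
    then have "padic_val_rat p S \<ge> ereal (of_int (\<lfloor>B\<rfloor> + 1))" by (rule geK)
    then have "real_of_int (\<lfloor>B\<rfloor> + 1) \<le> B" using eq by simp
    then show False by linarith
  qed
  have part3: "padic_val_rat p S = ereal B" if ex: "\<exists>\<alpha>::nat. n = 2 * p ^ \<alpha> - 1"
  proof -
    obtain \<alpha> :: nat where al: "n = 2 * p ^ \<alpha> - 1" using ex by blast
    define j0 where "j0 = p ^ \<alpha>"
    have j0pos: "j0 \<ge> 1" using p2 unfolding j0_def by simp
    have nj0: "n + 1 = 2 * j0" using al j0pos unfolding j0_def by simp
    have j0in: "j0 \<in> {1..n}" using j0pos nj0 by auto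
    have logal: "log (real p) (real (n + 1) / 2) = real \<alpha>"
    proof -
      have "real (n + 1) / 2 = real p ^ \<alpha>" using nj0 unfolding j0_def by (metis of_nat_mult of_nat_numeral of_nat_power nonzero_mult_div_cancel_left zero_neq_numeral)
      then show ?thesis using p2 by (simp add: log_nat_power)
    qed
    define K where "K = int (n + 1) - int \<alpha>"
    have BK: "B = real_of_int K" unfolding B_def K_def logal by simp
    have muj0: "mu (int j0) = \<alpha>" unfolding mu_def j0_def P_def[symmetric] using pe
      by (simp add: P_def multiplicity_prime_power)
    have Cj0: "C j0 = 1"
    proof -
      have "n - j0 = j0 - 1" using nj0 by simp
      then show ?thesis unfolding C_def by simp
    qed
    have T0: "T j0 \<noteq> 0" and muT0: "mu (T j0) = 2 * j0 + mu (int (F div j0))"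
      using muT[OF j0in] Cj0 by (auto simp: mu_def)
    define k0 where "k0 = mu (T j0)"
    have k0K: "int k0 = K + int e" unfolding k0_def muT0 K_def using ejw[OF j0in] muj0 nj0 by simp
    have rest: "P ^ nat ((K + 1) + int e) dvd (\<Sum>j\<in>{1..n} - {j0}. T j)"
    proof (rule LB)
      show "{1..n} - {j0} \<subseteq> {1..n}" by auto
      show "\<forall>j\<in>{1..n} - {j0}. C j \<noteq> 0 \<longrightarrow> K + 1 \<le> int (2 * j) - int (mu (int j))"
      proof (intro ballI impI)
        fix j assume jj: "j \<in> {1..n} - {j0}" and Cj: "C j \<noteq> 0"
        have j: "j \<in> {1..n}" "j \<noteq> j0" using jj by auto
        have "real (2 * j) - real (mu (int j)) \<noteq> B"
        proof
          assume "real (2 * j) - real (mu (int j)) = B"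
          from kr2[OF j(1) Cj this] have "j = j0" using nj0 by simp
          then show False using j(2) by simp
        qed
        then have "real_of_int K < real_of_int (int (2 * j) - int (mu (int j)))" using kr1[OF j(1) Cj] BK by simp
        then show "K + 1 \<le> int (2 * j) - int (mu (int j))" by linarith
      qed
    qed
    have sk: "nat ((K + 1) + int e) = Suc k0" using k0K by simp
    have Nsplit: "N = T j0 + (\<Sum>j\<in>{1..n} - {j0}. T j)" unfolding N_def
      using j0in by (simp add: sum.remove)
    have d1: "P ^ k0 dvd T j0" unfolding k0_def mu_def by (rule multiplicity_dvd)
    have d2: "\<not> P ^ Suc k0 dvd T j0"
    proof
      assume "P ^ Suc k0 dvd T j0"
      then have "Suc k0 \<le> mu (T j0)" unfolding mu_def by (intro multiplicity_geI T0 nu)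
      then show False unfolding k0_def by simp
    qed
    have restd: "P ^ Suc k0 dvd (\<Sum>j\<in>{1..n} - {j0}. T j)" using rest sk by simp
    have rest2: "P ^ k0 dvd (\<Sum>j\<in>{1..n} - {j0}. T j)"
      using restd by (rule dvd_trans[rotated]) (simp add: le_imp_power_dvd)
    have dN: "P ^ k0 dvd N" unfolding Nsplit using d1 rest2 by simp
    have ndN: "\<not> P ^ Suc k0 dvd N"
    proof
      assume "P ^ Suc k0 dvd N"
      then have "P ^ Suc k0 dvd N - (\<Sum>j\<in>{1..n} - {j0}. T j)" using restd by (simp add: dvd_diff)
      then show False using d2 Nsplit by simp
    qed
    have N0: "N \<noteq> 0" using ndN by auto
    have "mu N = k0" unfolding mu_def by (rule multiplicity_eqI[OF dN ndN])
    then show ?thesis using valS[OF N0] k0K BK by simp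
  qed
  show ?thesis using part1 part2 part3 unfolding B_def by blast
qed

end
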